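(* For any compact interval $\mathcal I\subset\mathbb R$ and any continuous piecewise linear function $f^*:\mathcal I\rightarrow\mathbb{R}$ with $P$ linear pieces ($P\in\mathbb N$), there exists a $\textsc{ReLU}$ network $f$ of width $2$ such that $f(x)=f^*(x)$ for all $x\in\mathcal I$.
   Context: A $\textsc{ReLU}$ network $f:\mathbb R\to\mathbb R$ is $t_L\circ\sigma_{L-1}\circ\cdots\circ\sigma_1\circ t_1$ with affine $t_\ell:\mathbb R^{d_{\ell-1}}\to\mathbb R^{d_\ell}$ ($d_0=d_L=1$) and coordinatewise $\textsc{ReLU}$ $\sigma_\ell$; its width is $\max\{d_1,\dots,d_{L-1}\}$. *)

theory Defs
  imports "HOL-Analysis.Analysis"
begin

text \<open>Vectors in R^d are represented as functions nat => real, of which only the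
  coordinates i < d are meaningful.\<close>

type_synonym layer = "(nat \<Rightarrow> nat \<Rightarrow> real) \<times> (nat \<Rightarrow> real)"

definition affine_map :: "layer \<Rightarrow> nat \<Rightarrow> (nat \<Rightarrow> real) \<Rightarrow> (nat \<Rightarrow> real)" where
  "affine_map t din x = (\<lambda>i. (\<Sum>j<din. fst t i j * x j) + snd t i)"

definition relu_vec :: "(nat \<Rightarrow> real) \<Rightarrow> (nat \<Rightarrow> real)" where
  "relu_vec v = (\<lambda>i. max 0 (v i))"

text \<open>net_eval ts ds x computes t_L o sigma o ... o sigma o t_1 applied to x, where
  ds lists the input dimensions d_0, ..., d_(L-1) of the layers t_1, ..., t_L.\<close>
fun net_eval :: "layer list \<Rightarrow> nat list \<Rightarrow> (nat \<Rightarrow> real) \<Rightarrow> (nat \<Rightarrow> real)" where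
  "net_eval [] ds x = x"
| "net_eval [t] ds x = affine_map t (hd ds) x"
| "net_eval (t # ts) ds x = net_eval ts (tl ds) (relu_vec (affine_map t (hd ds) x))"

definition relu_net :: "layer list \<Rightarrow> nat list \<Rightarrow> bool" where
  "relu_net ts ds \<longleftrightarrow> ts \<noteq> [] \<and> length ds = length ts + 1 \<and>
     hd ds = 1 \<and> last ds = 1 \<and> (\<forall>i<length ds. ds ! i \<ge> 1)"

definition net_fun :: "layer list \<Rightarrow> nat list \<Rightarrow> real \<Rightarrow> real" where
  "net_fun ts ds x = net_eval ts ds (\<lambda>_. x) 0"

definition net_width :: "nat list \<Rightarrow> nat" where
  "net_width ds = foldr max (butlast (tl ds)) 0"

definition cpwl_pieces :: "(real \<Rightarrow> real) \<Rightarrow> real \<Rightarrow> real \<Rightarrow> nat \<Rightarrow> bool" where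
  "cpwl_pieces f a b P \<longleftrightarrow> P \<ge> 1 \<and> continuous_on {a..b} f \<and>
     (\<exists>p :: nat \<Rightarrow> real. p 0 = a \<and> p P = b \<and> (\<forall>i<P. p i < p (Suc i)) \<and>
        (\<forall>i<P. \<exists>m c. \<forall>x\<in>{p i..p (Suc i)}. f x = m * x + c))"

end

theory Submission
  imports Defs
begin

fun hid :: "layer list \<Rightarrow> (nat \<Rightarrow> real) \<Rightarrow> (nat \<Rightarrow> real)" where
  "hid [] v = v"
| "hid (m # ms) v = hid ms (relu_vec (affine_map m 2 v))"

lemma hid_append: "hid (xs @ ys) v = hid ys (hid xs v)"
  by (induction xs arbitrary: v) auto

lemma net_eval_cons: "ts \<noteq> [] \<Longrightarrow> net_eval (t # ts) ds x = net_eval ts (tl ds) (relu_vec (affine_map t (hd ds) x))"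
  by (cases ts) auto

lemma net_eval_mid: "net_eval (ms @ [tL]) (replicate (length ms + 1) 2 @ [1]) v = affine_map tL 2 (hid ms v)"
proof (induction ms arbitrary: v)
  case Nil
  then show ?case by simp
next
  case (Cons m ms)
  have "net_eval ((m # ms) @ [tL]) (replicate (length (m # ms) + 1) 2 @ [1]) v
      = net_eval (ms @ [tL]) (replicate (length ms + 1) 2 @ [1]) (relu_vec (affine_map m 2 v))"
    by (subst append_Cons, subst net_eval_cons) auto
  then show ?case using Cons by simp
qed

definition mk2 :: "real \<Rightarrow> real \<Rightarrow> real \<Rightarrow> real \<Rightarrow> real \<Rightarrow> real \<Rightarrow> layer" where
  "mk2 w00 w01 w10 w11 c0 c1 = ((\<lambda>i j. if i = 0 then (if j = 0 then w00 else w01) else (if j = 0 then w10 else w11)),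
     (\<lambda>i. if i = 0 then c0 else c1))"

lemma aff2_0: "affine_map (mk2 w00 w01 w10 w11 c0 c1) 2 v 0 = w00 * v 0 + w01 * v 1 + c0"
  by (simp add: affine_map_def mk2_def numeral_2_eq_2)

lemma aff2_1: "affine_map (mk2 w00 w01 w10 w11 c0 c1) 2 v (Suc 0) = w10 * v 0 + w11 * v 1 + c1"
  by (simp add: affine_map_def mk2_def numeral_2_eq_2)

lemma aff1: "affine_map (mk2 w00 w01 w10 w11 c0 c1) 1 v 0 = w00 * v 0 + c0"
  "affine_map (mk2 w00 w01 w10 w11 c0 c1) 1 v (Suc 0) = w10 * v 0 + c1"
  by (simp_all add: affine_map_def mk2_def)

lemma width_rep: "foldr max (replicate (Suc n) (2::nat)) 0 = 2"
  by (induction n) auto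

lemma p_mono:
  fixes p :: "nat \<Rightarrow> real"
  assumes "\<forall>i<P. p i < p (Suc i)" "i \<le> j" "j \<le> P"
  shows "p i \<le> p j"
  using assms(2,3)
proof (induction j)
  case 0 then show ?case by simp
next
  case (Suc j)
  then show ?case using assms(1) by (cases "i = Suc j") (auto simp: le_Suc_eq intro: order_trans[OF _ less_imp_le])
qed

theorem lemma10:
  fixes a b :: real and fstar :: "real \<Rightarrow> real" and P :: nat
  assumes "a \<le> b"
    and "cpwl_pieces fstar a b P"
  shows "\<exists>ts ds. relu_net ts ds \<and> net_width ds = 2 \<and>
           (\<forall>x\<in>{a..b}. net_fun ts ds x = fstar x)"
proof -
  from assms(2) obtain p :: "nat \<Rightarrow> real" where p0: "p 0 = a" and pP: "p P = b"
    and pinc: "\<forall>i<P. p i < p (Suc i)"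
    and lin: "\<forall>i<P. \<exists>m c. \<forall>x\<in>{p i..p (Suc i)}. fstar x = m * x + c"
    and cont: "continuous_on {a..b} fstar"
    unfolding cpwl_pieces_def by blast
  have "compact (fstar ` {a..b})" by (rule compact_continuous_image[OF cont]) simp
  then have "bounded (fstar ` {a..b})" by (rule compact_imp_bounded)
  then obtain B where B: "\<And>y. y \<in> {a..b} \<Longrightarrow> \<bar>fstar y\<bar> \<le> B"
    unfolding bounded_iff by (metis atLeastAtMost_iff real_norm_def image_eqI)
  have pa: "a \<le> p k" if "k \<le> P" for k using p_mono[OF pinc, of 0 k] that p0 by simp
  have pb: "p k \<le> b" if "k \<le> P" for k using p_mono[OF pinc, of k P] that pP by simp
  define t1 where "t1 = mk2 1 0 0 0 (-a) (fstar a + B)"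
  define s0 where "s0 = (\<lambda>x::real. relu_vec (affine_map t1 1 (\<lambda>_. x)))"
  have inv: "\<exists>ms. \<forall>x\<in>{a..b}. hid ms (s0 x) 0 = max 0 (x - p k) \<and>
      hid ms (s0 x) 1 = fstar (min x (p k)) + B" if "k \<le> P" for k
    using that
  proof (induction k)
    case 0
    have "\<forall>x\<in>{a..b}. hid [] (s0 x) 0 = max 0 (x - p 0) \<and>
      hid [] (s0 x) 1 = fstar (min x (p 0)) + B"
    proof
      fix x assume x: "x \<in> {a..b}"
      have "fstar a + B \<ge> 0" using B[of a] assms(1) by auto
      then show "hid [] (s0 x) 0 = max 0 (x - p 0) \<and> hid [] (s0 x) 1 = fstar (min x (p 0)) + B"
        using x p0 by (auto simp: s0_def t1_def relu_vec_def affine_map_def mk2_def min_def)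
    qed
    then show ?case by blast
  next
    case (Suc k)
    then have kP: "k < P" by simp
    then obtain ms where ms: "\<forall>x\<in>{a..b}. hid ms (s0 x) 0 = max 0 (x - p k) \<and>
      hid ms (s0 x) 1 = fstar (min x (p k)) + B" using Suc by auto
    from lin kP obtain m c where mc: "\<forall>x\<in>{p k..p (Suc k)}. fstar x = m * x + c" by blast
    have lt: "p k < p (Suc k)" using pinc kP by auto
    define K where "K = \<bar>m\<bar> * (b - a)"
    define LA where "LA = mk2 1 0 m 1 (-(p (Suc k) - p k)) K"
    define LB where "LB = mk2 1 0 (-m) 1 0 (-K)"
    have "\<forall>x\<in>{a..b}. hid (ms @ [LA, LB]) (s0 x) 0 = max 0 (x - p (Suc k)) \<and>
      hid (ms @ [LA, LB]) (s0 x) 1 = fstar (min x (p (Suc k))) + B"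
    proof
      fix x assume x: "x \<in> {a..b}"
      define z where "z = hid ms (s0 x) 0"
      define v where "v = hid ms (s0 x) 1"
      have z: "z = max 0 (x - p k)" and v: "v = fstar (min x (p k)) + B"
        using ms x by (auto simp: z_def v_def)
      have pka: "a \<le> p k" using pa kP by simp
      have zb: "0 \<le> z" "z \<le> b - a" using z x pka by auto
      have "\<bar>m * z\<bar> \<le> K" unfolding K_def abs_mult using zb
        by (intro mult_left_mono) auto
      then have mzK: "m * z + K \<ge> 0" by linarith
      have mink: "min x (p k) \<in> {a..b}" using x pka pb kP by auto
      have v0: "v \<ge> 0" using B[OF mink] v by auto
      have u0: "max 0 (z - (p (Suc k) - p k)) = max 0 (x - p (Suc k))" using z lt by auto
      have key: "fstar (min x (p (Suc k))) = fstar (min x (p k)) + m * (z - max 0 (x - p (Suc k)))"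
      proof (cases "x \<le> p k")
        case True then show ?thesis using z lt by (simp add: min_def)
      next
        case False
        note F = this
        have z2: "z = x - p k" using z F by simp
        have e1: "fstar (p k) = m * p k + c" using mc lt by auto
        show ?thesis
        proof (cases "x \<le> p (Suc k)")
          case True
          have "fstar x = m * x + c" using mc True F by auto
          then show ?thesis using True F e1 by (simp add: min_def z2 algebra_simps)
        next
          case False
          have "fstar (p (Suc k)) = m * p (Suc k) + c" using mc lt by auto
          then show ?thesis using False F e1 by (simp add: min_def z2 algebra_simps)
        qed
      qed
      have minsk: "min x (p (Suc k)) \<in> {a..b}" using x pa[of "Suc k"] pb[of "Suc k"] Suc.prems by auto
      have fin0: "fstar (min x (p (Suc k))) + B \<ge> 0" using B[OF minsk] by auto
      have h: "hid (ms @ [LA, LB]) (s0 x) = relu_vec (affine_map LB 2 (relu_vec (affine_map LA 2 (hid ms (s0 x)))))"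
        by (simp add: hid_append)
      show "hid (ms @ [LA, LB]) (s0 x) 0 = max 0 (x - p (Suc k)) \<and>
        hid (ms @ [LA, LB]) (s0 x) 1 = fstar (min x (p (Suc k))) + B"
      proof -
        define y where "y = hid ms (s0 x)"
        define R where "R = relu_vec (affine_map LA 2 y)"
        have R0: "R 0 = max 0 (x - p (Suc k))"
          unfolding R_def relu_vec_def LA_def aff2_0 using u0 by (simp add: y_def flip: z_def)
        have R1: "R (Suc 0) = m * z + v + K"
          unfolding R_def relu_vec_def LA_def aff2_1 using v0 mzK
          by (simp add: y_def flip: z_def v_def One_nat_def)
        have F0: "relu_vec (affine_map LB 2 R) 0 = max 0 (x - p (Suc k))"
          unfolding relu_vec_def LB_def aff2_0 using R0 by simp
        have F1: "relu_vec (affine_map LB 2 R) 1 = fstar (min x (p (Suc k))) + B"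
          unfolding relu_vec_def LB_def One_nat_def aff2_1 using R0 R1 key v fin0
          by (simp add: algebra_simps flip: One_nat_def)
        show ?thesis unfolding h using F0 F1 by (simp add: R_def y_def)
      qed
    qed
    then show ?case by blast
  qed
  obtain ms where ms: "\<forall>x\<in>{a..b}. hid ms (s0 x) 0 = max 0 (x - p P) \<and>
      hid ms (s0 x) 1 = fstar (min x (p P)) + B" using inv[of P] by auto
  define tL where "tL = mk2 0 1 0 0 (-B) 0"
  define ts where "ts = t1 # ms @ [tL]"
  define ds where "ds = 1 # replicate (length ms + 1) (2::nat) @ [1]"
  have "relu_net ts ds"
    unfolding relu_net_def ts_def ds_def by (auto simp: nth_append nth_Cons split: nat.splits)
  moreover have "net_width ds = 2"
  proof -
    have "butlast (tl ds) = replicate (Suc (length ms)) 2" unfolding ds_def by (simp add: butlast_append)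
    then show ?thesis unfolding net_width_def by (simp only: width_rep)
  qed
  moreover have "\<forall>x\<in>{a..b}. net_fun ts ds x = fstar x"
  proof
    fix x assume x: "x \<in> {a..b}"
    have "net_fun ts ds x = net_eval (ms @ [tL]) (replicate (length ms + 1) 2 @ [1]) (s0 x) 0"
      unfolding net_fun_def ts_def ds_def s0_def by (subst net_eval_cons) auto
    also have "\<dots> = hid ms (s0 x) 1 - B"
      by (simp only: net_eval_mid) (simp add: tL_def aff2_0)
    also have "\<dots> = fstar x" using ms x pP by (auto simp: min_def)
    finally show "net_fun ts ds x = fstar x" .
  qed
  ultimately show ?thesis by blast
qed

end
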